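(* Let $n$ be a prime and let $g_1,g_2$ be two generators of $U(\mathbb Z/n\mathbb Z)$. Let $C$ be a circulant matrix of order $n$ and set $A=Q_{g_1}C$ and $B=Q_{g_2}C$ (a $g_1$-circulant and a $g_2$-circulant matrix, respectively). Then $A$ and $B$ have the same eigenvalues. In particular, if $g_1^{-1}$ denotes the inverse of $g_1$ modulo $n$, then $Q_{g_1}C$ and $Q_{g_1^{-1}}C$ have the same eigenvalues.
   Context: $Q_h$ is the $n\times n$ permutation matrix whose $(i,j)$ entry is $1$ if $j\equiv 1+(i-1)h\pmod n$ (indices in $\{1,\dots,n\}$) and $0$ otherwise. A circulant matrix $circ(c_1,\dots,c_n)$ has $(i,j)$ entry $c_{j-i+1}$ (subscripts mod $n$); an $h$-circulant matrix is one in which each row is the preceding row cyclically shifted $h$ places to the right. *)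

theory Defs
  imports "HOL-Number_Theory.Number_Theory" "Jordan_Normal_Form.Matrix" "Jordan_Normal_Form.Char_Poly"
begin

text \<open>Indices are 0-based: row/column i (0 \<le> i < n) corresponds to the paper's index i+1.
  The paper's condition j \<equiv> 1+(i-1)h (mod n) becomes j \<equiv> i*h (mod n).\<close>
definition Q_mat :: "nat \<Rightarrow> nat \<Rightarrow> complex mat" where
  "Q_mat n h = mat n n (\<lambda>(i,j). if j mod n = (i * h) mod n then 1 else 0)"

text \<open>circ(c_1,...,c_n): entry (i,j) is c_{j-i+1}; 0-based: c ((j - i) mod n).\<close>
definition circulant :: "nat \<Rightarrow> (nat \<Rightarrow> complex) \<Rightarrow> complex mat" where
  "circulant n c = mat n n (\<lambda>(i,j). c ((j + n - i) mod n))"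

definition eigenvalues :: "complex mat \<Rightarrow> complex set" where
  "eigenvalues A = {k. eigenvalue A k}"

end

theory Submission
  imports Defs
begin


definition W :: "nat \<Rightarrow> int \<Rightarrow> complex" where
  "W n a = cis (2*pi*of_int a / of_nat n)"

lemma W_add: "W n (a+b) = W n a * W n b"
  unfolding W_def by (simp add: cis_mult add_divide_distrib distrib_left)

lemma W_mult_n: assumes "n > 0" shows "W n (int n * q) = 1"
proof -
  have "2*pi*of_int (int n * q) / of_nat n = 2*pi*of_int q" using assms by simp
  then show ?thesis unfolding W_def by simp
qed

lemma W_mod: assumes "n > 0" shows "W n (a mod int n) = W n a"
proof -
  have "a = a mod int n + int n * (a div int n)" by simp
  then have "W n a = W n (a mod int n) * W n (int n * (a div int n))"
    by (metis W_add)
  then show ?thesis using W_mult_n[OF assms] by simp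
qed

lemma W_cong: assumes "n > 0" "a mod int n = b mod int n" shows "W n a = W n b"
  by (metis W_mod assms)

lemma W_pow: "W n (int j * m) = W n m ^ j"
  unfolding W_def DeMoivre by (simp add: mult_ac)

lemma W_one_iff: assumes "n > 0" shows "W n m = 1 \<longleftrightarrow> int n dvd m"
proof
  assume "int n dvd m"
  then obtain q where "m = int n * q" by blast
  then show "W n m = 1" using W_mult_n[OF assms] by simp
next
  assume h: "W n m = 1"
  have "cos (2*pi*of_int m / of_nat n) = 1"
    using h unfolding W_def by (metis complex.sel(1) cis.sel(1) one_complex.sel(1))
  then obtain k::int where k: "2*pi*of_int m / of_nat n = of_int k * 2 * pi"
    by (meson cos_one_2pi_int)
  then have "of_int m = (of_int k * of_nat n :: real)" using assms
    by (simp add: field_simps)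
  then have "m = k * int n" by (metis of_int_eq_iff of_int_mult of_int_of_nat_eq)
  then show "int n dvd m" by simp
qed

lemma W_sum: assumes "n > 0"
  shows "(\<Sum>j<n. W n (int j * m)) = (if int n dvd m then of_nat n else 0)"
proof (cases "int n dvd m")
  case True
  then have "W n m = 1" using W_one_iff[OF assms] by simp
  then have "\<And>j. W n (int j * m) = 1" by (simp add: W_pow)
  then show ?thesis using True by simp
next
  case False
  then have ne: "W n m \<noteq> 1" using W_one_iff[OF assms] by simp
  have "(\<Sum>j<n. W n (int j * m)) = (\<Sum>j<n. W n m ^ j)" by (simp add: W_pow)
  also have "\<dots> = (W n m ^ n - 1) / (W n m - 1)" by (rule geometric_sum[OF ne])
  also have "W n m ^ n = 1" using W_pow[of n n m] W_mult_n[OF assms, of m] by simp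
  finally show ?thesis using False by simp
qed



lemma W_cong2: assumes "n > 0" "[a = b] (mod int n)" shows "W n a = W n b"
  using W_cong assms unfolding cong_def by blast

lemma W_mod_mult: assumes "n > 0" shows "W n (a mod int n * b) = W n (a * b)"
  by (rule W_cong2[OF assms]) (simp add: cong_def mod_mult_left_eq)

lemma W_mod_mult_neg: assumes "n > 0" shows "W n (- (a mod int n * b)) = W n (- (a * b))"
proof (rule W_cong2[OF assms])
  have "[a mod int n * b = a * b] (mod int n)" by (simp add: cong_def mod_mult_left_eq)
  then show "[- (a mod int n * b) = - (a * b)] (mod int n)" by (rule cong_minus_minus_iff[THEN iffD2])
qed

lemma shift_sum: assumes "n > 0"
  shows "(\<Sum>j<n. f (nat ((int j + s) mod int n))) = (\<Sum>j<n. (f j :: complex))"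
proof (rule sum.reindex_bij_witness[where i = "\<lambda>m. nat ((int m - s) mod int n)" and j = "\<lambda>j. nat ((int j + s) mod int n)"])
  fix a assume a: "a \<in> {..<n}"
  have "int (nat ((int a + s) mod int n)) = (int a + s) mod int n" using assms by simp
  then have "(int (nat ((int a + s) mod int n)) - s) mod int n = (int a + s - s) mod int n"
    by (simp add: mod_diff_left_eq)
  then show "nat ((int (nat ((int a + s) mod int n)) - s) mod int n) = a" using a by simp
  show "nat ((int a + s) mod int n) \<in> {..<n}" using assms
    by (simp add: nat_less_iff)
next
  fix b assume b: "b \<in> {..<n}"
  have "int (nat ((int b - s) mod int n)) = (int b - s) mod int n" using assms by simp
  then have "(int (nat ((int b - s) mod int n)) + s) mod int n = (int b - s + s) mod int n"
    by (simp add: mod_add_left_eq)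
  then show "nat ((int (nat ((int b - s) mod int n)) + s) mod int n) = b" using b by simp
  show "nat ((int b - s) mod int n) \<in> {..<n}" using assms by (simp add: nat_less_iff)
qed simp

lemma refl_sum: assumes "n > 0"
  shows "(\<Sum>j<n. f (nat ((s - int j) mod int n))) = (\<Sum>j<n. (f j :: complex))"
proof -
  have key: "nat ((s - (s - int a) mod int n) mod int n) = a" if a: "a < n" for a
  proof -
    have "(s - (s - int a) mod int n) mod int n = (s - (s - int a)) mod int n"
      by (simp add: mod_diff_right_eq)
    then show ?thesis using a by simp
  qed
  show ?thesis
    by (rule sum.reindex_bij_witness[where i = "\<lambda>m. nat ((s - int m) mod int n)" and j = "\<lambda>j. nat ((s - int j) mod int n)"])
      (use assms in \<open>auto simp: key nat_less_iff\<close>)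
qed

lemma bij_mult: fixes h :: nat assumes "n > 0" "coprime n h"
  shows "bij_betw (\<lambda>i. i * h mod n) {..<n} {..<n}"
proof -
  have inj: "inj_on (\<lambda>i. i * h mod n) {..<n}"
  proof (rule inj_onI)
    fix x y assume x: "x \<in> {..<n}" and y: "y \<in> {..<n}" and e: "x * h mod n = y * h mod n"
    have "[x * h = y * h] (mod n)" using e by (simp add: cong_def)
    then have "[x = y] (mod n)" using assms(2) by (simp add: cong_mult_rcancel_nat coprime_commute)
    then show "x = y" using x y by (simp add: cong_def)
  qed
  have sub: "(\<lambda>i. i * h mod n) ` {..<n} \<subseteq> {..<n}" using assms by auto
  have "(\<lambda>i. i * h mod n) ` {..<n} = {..<n}"
    using endo_inj_surj[OF _ sub inj] by simp
  then show ?thesis using inj by (simp add: bij_betw_def)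
qed

lemma sum_mult_reindex: fixes h :: nat assumes "n > 0" "coprime n h"
  shows "(\<Sum>i<n. f (i * h mod n)) = (\<Sum>i<n. (f i :: complex))"
  using sum.reindex[OF bij_betw_imp_inj_on[OF bij_mult[OF assms]], of f]
    bij_betw_imp_surj_on[OF bij_mult[OF assms]] by simp

lemma circ_idx: assumes "j < n" "r < n"
  shows "(j + n - r) mod n = nat ((int j - int r) mod int n)"
proof -
  have "int ((j + n - r) mod n) = int (j + n - r) mod int n" by (simp add: zmod_int)
  also have "int (j + n - r) = (int j - int r) + int n" using assms by simp
  finally show ?thesis by simp
qed

lemma QC_entry: assumes "i < n" "j < n"
  shows "(Q_mat n h * circulant n c) $$ (i,j) = c (nat ((int j - int (i * h mod n)) mod int n))"
proof -
  have n0: "n > 0" using assms by simp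
  have "(Q_mat n h * circulant n c) $$ (i,j) =
      (\<Sum>l<n. (if l = i * h mod n then 1 else 0) * c ((j + n - l) mod n))"
    using assms unfolding Q_mat_def circulant_def
    by (simp add: scalar_prod_def lessThan_atLeast0 cong: if_cong)
  also have "\<dots> = (\<Sum>l<n. if l = i * h mod n then c ((j + n - l) mod n) else 0)"
    by (rule sum.cong) auto
  also have "\<dots> = c ((j + n - i * h mod n) mod n)"
    using n0 by (simp add: sum.delta)
  also have "\<dots> = c (nat ((int j - int (i * h mod n)) mod int n))"
    using circ_idx[OF assms(2), of "i * h mod n"] n0 by simp
  finally show ?thesis .
qed

lemma QC_dim: "Q_mat n h * circulant n c \<in> carrier_mat n n"
  unfolding Q_mat_def circulant_def by (rule mult_carrier_mat) auto

lemma QC_mult_vec: assumes "v \<in> carrier_vec n" "i < n"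
  shows "((Q_mat n h * circulant n c) *\<^sub>v v) $ i =
    (\<Sum>j<n. c (nat ((int j - int (i * h mod n)) mod int n)) * v $ j)"
proof -
  have "((Q_mat n h * circulant n c) *\<^sub>v v) $ i = (\<Sum>j<n. (Q_mat n h * circulant n c) $$ (i,j) * v $ j)"
    using assms carrier_matD[OF QC_dim[of n h c]] by (simp add: scalar_prod_def lessThan_atLeast0)
  also have "\<dots> = (\<Sum>j<n. c (nat ((int j - int (i * h mod n)) mod int n)) * v $ j)"
    by (rule sum.cong) (use assms in \<open>auto simp: QC_entry\<close>)
  finally show ?thesis .
qed

definition lam :: "nat \<Rightarrow> (nat \<Rightarrow> complex) \<Rightarrow> nat \<Rightarrow> complex" where
  "lam n c k = (\<Sum>m<n. c m * W n (int m * int k))"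
definition fv :: "nat \<Rightarrow> complex vec \<Rightarrow> nat \<Rightarrow> complex" where
  "fv n v k = (\<Sum>j<n. W n (- (int j * int k)) * v $ j)"
definition Vv :: "nat \<Rightarrow> (nat \<Rightarrow> complex) \<Rightarrow> complex vec" where
  "Vv n a = vec n (\<lambda>j. \<Sum>k<n. a k * W n (int j * int k))"

lemma int_dvd_diff_eq: assumes "j < n" "l < n" "int n dvd (int j - int l)" shows "j = l"
proof -
  have "[int j = int l] (mod int n)" using assms(3) by (simp add: cong_iff_dvd_diff)
  then have "[j = l] (mod n)" by (simp add: cong_int_iff)
  then show ?thesis using assms by (simp add: cong_def)
qed

lemma F3: assumes "n > 0" "v \<in> carrier_vec n" "j < n"
  shows "(\<Sum>k<n. W n (int j * int k) * fv n v k) = of_nat n * v $ j"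
proof -
  have "(\<Sum>k<n. W n (int j * int k) * fv n v k) =
      (\<Sum>k<n. \<Sum>l<n. v $ l * W n (int k * (int j - int l)))"
    unfolding fv_def sum_distrib_left
    by (intro sum.cong refl) (simp add: W_add[symmetric] algebra_simps)
  also have "\<dots> = (\<Sum>l<n. v $ l * (\<Sum>k<n. W n (int k * (int j - int l))))"
    by (subst sum.swap) (simp add: sum_distrib_left)
  also have "\<dots> = (\<Sum>l<n. if l = j then of_nat n * v $ j else 0)"
    by (intro sum.cong refl) (use assms int_dvd_diff_eq[of j n] in \<open>auto simp: W_sum\<close>)
  also have "\<dots> = of_nat n * v $ j" using assms by (simp add: sum.delta')
  finally show ?thesis .
qed

lemma F4: assumes "n > 0" "l < n"
  shows "fv n (Vv n a) l = of_nat n * a l"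
proof -
  have "fv n (Vv n a) l = (\<Sum>j<n. W n (- (int j * int l)) * (\<Sum>k<n. a k * W n (int j * int k)))"
    unfolding fv_def Vv_def by (intro sum.cong refl) simp
  also have "\<dots> = (\<Sum>j<n. \<Sum>k<n. a k * W n (int j * (int k - int l)))"
  proof (intro sum.cong refl)
    fix j
    show "W n (- (int j * int l)) * (\<Sum>k<n. a k * W n (int j * int k)) = (\<Sum>k<n. a k * W n (int j * (int k - int l)))"
      unfolding sum_distrib_left
    proof (intro sum.cong refl)
      fix k
      have "W n (int j * (int k - int l)) = W n (int j * int k + - (int j * int l))" by (simp add: algebra_simps)
      also have "\<dots> = W n (int j * int k) * W n (- (int j * int l))" by (rule W_add)
      finally show "W n (- (int j * int l)) * (a k * W n (int j * int k)) = a k * W n (int j * (int k - int l))"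
        by simp
    qed
  qed
  also have "\<dots> = (\<Sum>k<n. a k * (\<Sum>j<n. W n (int j * (int k - int l))))"
    by (subst sum.swap) (simp add: sum_distrib_left)
  also have "\<dots> = (\<Sum>k<n. if k = l then of_nat n * a l else 0)"
    by (intro sum.cong refl) (use assms int_dvd_diff_eq[of _ n l] in \<open>auto simp: W_sum\<close>)
  also have "\<dots> = of_nat n * a l" using assms by (simp add: sum.delta')
  finally show ?thesis .
qed

lemma F2_inner: fixes h :: nat assumes "n > 0" "coprime n h" "j < n"
  shows "(\<Sum>i<n. W n (- (int i * int (h * k))) * c (nat ((int j - int (i * h mod n)) mod int n)))
    = W n (- (int j * int k)) * lam n c k"
proof -
  define g where "g r = W n (- (int r * int k)) * c (nat ((int j - int r) mod int n))" for r
  have "(\<Sum>i<n. W n (- (int i * int (h * k))) * c (nat ((int j - int (i * h mod n)) mod int n)))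
      = (\<Sum>i<n. g (i * h mod n))"
  proof (intro sum.cong refl)
    fix i
    have "W n (- (int (i * h mod n) * int k)) = W n (- ((int i * int h) mod int n * int k))"
      by (simp add: zmod_int)
    also have "\<dots> = W n (- (int i * int (h * k)))"
      using W_mod_mult_neg[OF assms(1)] by (simp add: mult_ac)
    finally show "W n (- (int i * int (h * k))) * c (nat ((int j - int (i * h mod n)) mod int n)) = g (i * h mod n)"
      unfolding g_def by simp
  qed
  also have "\<dots> = (\<Sum>r<n. g r)" by (rule sum_mult_reindex[OF assms(1,2)])
  also have "\<dots> = (\<Sum>m<n. g (nat ((int j - int m) mod int n)))"
    by (rule refl_sum[OF assms(1), symmetric])
  also have "\<dots> = (\<Sum>m<n. W n (- (int j * int k)) * (c m * W n (int m * int k)))"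
  proof (intro sum.cong refl)
    fix m assume m: "m \<in> {..<n}"
    have i1: "int (nat ((int j - int m) mod int n)) = (int j - int m) mod int n" using assms by simp
    have "W n (- ((int j - int m) mod int n * int k)) = W n (- ((int j - int m) * int k))"
      by (rule W_mod_mult_neg[OF assms(1)])
    also have "\<dots> = W n (- (int j * int k) + int m * int k)" by (simp add: algebra_simps)
    also have "\<dots> = W n (- (int j * int k)) * W n (int m * int k)" by (rule W_add)
    finally have e1: "W n (- ((int j - int m) mod int n * int k)) = W n (- (int j * int k)) * W n (int m * int k)" .
    have "(int j - (int j - int m) mod int n) mod int n = (int j - (int j - int m)) mod int n"
      by (simp add: mod_diff_right_eq)
    then have e2: "nat ((int j - (int j - int m) mod int n) mod int n) = m" using m by simp
    show "g (nat ((int j - int m) mod int n)) = W n (- (int j * int k)) * (c m * W n (int m * int k))"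
      unfolding g_def i1 e1 e2 by simp
  qed
  also have "\<dots> = W n (- (int j * int k)) * lam n c k"
    unfolding lam_def by (simp add: sum_distrib_left)
  finally show ?thesis .
qed

lemma F2: fixes h :: nat assumes "n > 0" "coprime n h" "v \<in> carrier_vec n"
  shows "fv n ((Q_mat n h * circulant n c) *\<^sub>v v) (h * k) = lam n c k * fv n v k"
proof -
  have "fv n ((Q_mat n h * circulant n c) *\<^sub>v v) (h * k) =
     (\<Sum>i<n. \<Sum>j<n. W n (- (int i * int (h * k))) * c (nat ((int j - int (i * h mod n)) mod int n)) * v $ j)"
    unfolding fv_def by (intro sum.cong refl) (simp add: QC_mult_vec[OF assms(3)] sum_distrib_left mult_ac)
  also have "\<dots> = (\<Sum>j<n. (\<Sum>i<n. W n (- (int i * int (h * k))) * c (nat ((int j - int (i * h mod n)) mod int n))) * v $ j)"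
    by (subst sum.swap) (simp add: sum_distrib_right)
  also have "\<dots> = (\<Sum>j<n. W n (- (int j * int k)) * lam n c k * v $ j)"
  proof (intro sum.cong refl)
    fix j assume "j \<in> {..<n}"
    then show "(\<Sum>i<n. W n (- (int i * int (h * k))) * c (nat ((int j - int (i * h mod n)) mod int n))) * v $ j = W n (- (int j * int k)) * lam n c k * v $ j"
      using F2_inner[OF assms(1,2), of j k c] by simp
  qed
  also have "\<dots> = lam n c k * fv n v k"
    unfolding fv_def by (simp add: sum_distrib_left mult_ac)
  finally show ?thesis .
qed

lemma AE_inner: fixes h :: nat assumes "n > 0" "i < n"
  shows "(\<Sum>j<n. c (nat ((int j - int (i * h mod n)) mod int n)) * W n (int j * int k))
    = lam n c k * W n (int i * int (k * h mod n))"
proof -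
  define r where "r = int (i * h mod n)"
  define g where "g j = c (nat ((int j - r) mod int n)) * W n (int j * int k)" for j
  have "(\<Sum>j<n. c (nat ((int j - int (i * h mod n)) mod int n)) * W n (int j * int k)) = (\<Sum>j<n. g j)"
    unfolding g_def r_def ..
  also have "\<dots> = (\<Sum>m<n. g (nat ((int m + r) mod int n)))"
    by (rule shift_sum[OF assms(1), symmetric])
  also have "\<dots> = (\<Sum>m<n. c m * W n (int m * int k) * W n (r * int k))"
  proof (intro sum.cong refl)
    fix m assume m: "m \<in> {..<n}"
    have i1: "int (nat ((int m + r) mod int n)) = (int m + r) mod int n" using assms by simp
    have "(((int m + r) mod int n) - r) mod int n = (int m + r - r) mod int n"
      by (simp add: mod_diff_left_eq)
    then have e2: "nat ((((int m + r) mod int n) - r) mod int n) = m" using m by simp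
    have "W n ((int m + r) mod int n * int k) = W n ((int m + r) * int k)"
      by (rule W_mod_mult[OF assms(1)])
    also have "\<dots> = W n (int m * int k) * W n (r * int k)" by (simp add: distrib_right W_add)
    finally show "g (nat ((int m + r) mod int n)) = c m * W n (int m * int k) * W n (r * int k)"
      unfolding g_def i1 e2 by simp
  qed
  also have "\<dots> = lam n c k * W n (r * int k)"
    unfolding lam_def by (simp add: sum_distrib_right)
  also have "W n (r * int k) = W n (int i * int (k * h mod n))"
  proof -
    have "W n (r * int k) = W n ((int i * int h) mod int n * int k)" unfolding r_def by (simp add: zmod_int)
    also have "\<dots> = W n (int i * int h * int k)" by (rule W_mod_mult[OF assms(1)])
    also have "\<dots> = W n ((int k * int h) mod int n * int i)" 
      using W_mod_mult[OF assms(1), of "int k * int h" "int i"] by (simp add: mult_ac)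
    also have "\<dots> = W n (int i * int (k * h mod n))" by (simp add: zmod_int mult_ac)
    finally show ?thesis .
  qed
  finally show ?thesis .
qed

lemma F5: fixes h :: nat assumes "n > 0" "coprime n h"
  and R: "\<forall>k<n. z * a (k * h mod n) = a k * lam n c k"
  shows "(Q_mat n h * circulant n c) *\<^sub>v Vv n a = z \<cdot>\<^sub>v Vv n a"
proof (rule eq_vecI)
  have dims: "dim_row (Q_mat n h * circulant n c) = n" using carrier_matD[OF QC_dim[of n h c]] by simp
  show "dim_vec ((Q_mat n h * circulant n c) *\<^sub>v Vv n a) = dim_vec (z \<cdot>\<^sub>v Vv n a)"
    using dims by (simp add: Vv_def)
  fix i assume "i < dim_vec (z \<cdot>\<^sub>v Vv n a)"
  then have i: "i < n" by (simp add: Vv_def)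
  have "((Q_mat n h * circulant n c) *\<^sub>v Vv n a) $ i =
     (\<Sum>j<n. c (nat ((int j - int (i * h mod n)) mod int n)) * (\<Sum>k<n. a k * W n (int j * int k)))"
    using QC_mult_vec[of "Vv n a" n i h c] i by (simp add: Vv_def)
  also have "\<dots> = (\<Sum>k<n. a k * (\<Sum>j<n. c (nat ((int j - int (i * h mod n)) mod int n)) * W n (int j * int k)))"
    unfolding sum_distrib_left by (subst sum.swap) (simp add: mult_ac)
  also have "\<dots> = (\<Sum>k<n. z * a (k * h mod n) * W n (int i * int (k * h mod n)))"
    by (intro sum.cong refl) (use R in \<open>simp add: AE_inner[OF assms(1) i]\<close>)
  also have "\<dots> = (\<Sum>k<n. z * a k * W n (int i * int k))"
    by (rule sum_mult_reindex[OF assms(1,2), of "\<lambda>k. z * a k * W n (int i * int k)"])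
  also have "\<dots> = (z \<cdot>\<^sub>v Vv n a) $ i" using i by (simp add: Vv_def sum_distrib_left mult_ac)
  finally show "((Q_mat n h * circulant n c) *\<^sub>v Vv n a) $ i = (z \<cdot>\<^sub>v Vv n a) $ i" .
qed

lemma E1: fixes h :: nat assumes "n > 0" "coprime n h"
  and R: "\<forall>k<n. z * a (k * h mod n) = a k * lam n c k"
  and l: "l < n" "a l \<noteq> 0"
  shows "eigenvalue (Q_mat n h * circulant n c) z"
proof -
  have dims: "dim_row (Q_mat n h * circulant n c) = n" using carrier_matD[OF QC_dim[of n h c]] by simp
  have nz: "Vv n a \<noteq> 0\<^sub>v n"
  proof
    assume "Vv n a = 0\<^sub>v n"
    then have "fv n (Vv n a) l = 0" by (simp add: fv_def)
    then show False using F4[OF assms(1) l(1), of a] l assms(1) by simp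
  qed
  show ?thesis unfolding eigenvalue_def eigenvector_def dims
    using F5[OF assms(1,2) R] nz by (intro exI[of _ "Vv n a"]) (simp add: Vv_def)
qed

lemma E2: fixes h :: nat assumes "n > 0" "coprime n h"
  and ev: "eigenvalue (Q_mat n h * circulant n c) z"
  shows "\<exists>b. (\<exists>l<n. b l \<noteq> 0) \<and> (\<forall>k<n. z * b (k * h mod n) = b k * lam n c k)"
proof -
  have dims: "dim_row (Q_mat n h * circulant n c) = n" using carrier_matD[OF QC_dim[of n h c]] by simp
  obtain v where v: "v \<in> carrier_vec n" "v \<noteq> 0\<^sub>v n" "(Q_mat n h * circulant n c) *\<^sub>v v = z \<cdot>\<^sub>v v"
    using ev unfolding eigenvalue_def eigenvector_def dims by blast
  have fvs: "fv n (z \<cdot>\<^sub>v v) m = z * fv n v m" for m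
    using v(1) unfolding fv_def by (simp add: sum_distrib_left mult_ac)
  have fvmod: "fv n v (h * k) = fv n v (k * h mod n)" for k
    unfolding fv_def
  proof (intro sum.cong refl)
    fix j
    have "W n (- (int j * int (h * k))) = W n (- ((int k * int h) mod int n * int j))"
      using W_mod_mult_neg[OF assms(1), of "int k * int h" "int j"] by (simp add: mult_ac)
    also have "\<dots> = W n (- (int j * int (k * h mod n)))" by (simp add: zmod_int mult_ac)
    finally show "W n (- (int j * int (h * k))) * v $ j = W n (- (int j * int (k * h mod n))) * v $ j"
      by simp
  qed
  have R: "\<forall>k<n. z * fv n v (k * h mod n) = fv n v k * lam n c k"
  proof (intro allI impI)
    fix k
    have "fv n ((Q_mat n h * circulant n c) *\<^sub>v v) (h * k) = lam n c k * fv n v k"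
      by (rule F2[OF assms(1,2) v(1)])
    then have "z * fv n v (h * k) = lam n c k * fv n v k" by (simp only: v(3) fvs)
    then have e: "z * fv n v (k * h mod n) = lam n c k * fv n v k" by (simp only: fvmod)
    then show "z * fv n v (k * h mod n) = fv n v k * lam n c k" by (simp add: ac_simps)
  qed
  have "\<exists>l<n. fv n v l \<noteq> 0"
  proof (rule ccontr)
    assume "\<not> (\<exists>l<n. fv n v l \<noteq> 0)"
    then have z: "\<forall>l<n. fv n v l = 0" by simp
    have "v = 0\<^sub>v n"
    proof (rule eq_vecI)
      fix j assume "j < dim_vec (0\<^sub>v n :: complex vec)"
      then have j: "j < n" by simp
      have "of_nat n * v $ j = 0" using F3[OF assms(1) v(1) j] z by simp
      then show "v $ j = 0\<^sub>v n $ j" using j assms(1) by simp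
    qed (use v(1) in simp)
    then show False using v(2) by simp
  qed
  then show ?thesis using R by blast
qed



locale prim =
  fixes n h :: nat
  assumes pr: "prime n" and prh: "residue_primroot n h"
begin

lemma n1: "n > 1" using pr prime_gt_1_nat by blast
lemma cop: "coprime n h" using prh by (simp add: residue_primroot_def)
lemma ordh: "ord n h = n - 1" using prh pr by (simp add: residue_primroot_def totient_prime)

lemma hpow: "h ^ (n - 1) mod n = 1"
proof -
  have "[h ^ ord n h = 1] (mod n)" by (rule ord)
  then show ?thesis using ordh n1 by (simp add: cong_def)
qed

lemma nz_mod: assumes "k \<in> {1..<n}" shows "h ^ i * k mod n \<in> {1..<n}"
proof -
  have "\<not> n dvd h" using cop n1
    by (metis coprime_absorb_left nat_dvd_1_iff_1 order_less_irrefl)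
  then have "\<not> n dvd h ^ i" using pr prime_dvd_power by blast
  moreover have "\<not> n dvd k" using assms by (auto dest: dvd_imp_le)
  ultimately have "\<not> n dvd h ^ i * k" using pr by (simp add: prime_dvd_mult_iff)
  then show ?thesis using n1 by (auto simp: dvd_eq_mod_eq_0)
qed

lemma mulh_nz: assumes "k \<in> {1..<n}" shows "k * h mod n \<noteq> 0"
  using nz_mod[OF assms, of 1] by (simp add: mult.commute)

lemma pow_bij: assumes l: "l \<in> {1..<n}"
  shows "bij_betw (\<lambda>i. h ^ i * l mod n) {..<n-1} {1..<n}"
proof -
  have "\<not> n dvd l" using l by (auto dest: dvd_imp_le)
  then have copl: "coprime n l" using prime_imp_coprime[OF pr] by blast
  have inj: "inj_on (\<lambda>i. h ^ i * l mod n) {..<n-1}"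
  proof (rule inj_onI)
    fix x y assume x: "x \<in> {..<n-1}" and y: "y \<in> {..<n-1}"
      and e: "h ^ x * l mod n = h ^ y * l mod n"
    have "[h ^ x * l = h ^ y * l] (mod n)" using e by (simp add: cong_def)
    then have "[h ^ x = h ^ y] (mod n)" using copl by (simp add: cong_mult_rcancel_nat coprime_commute)
    then have "[x = y] (mod (n - 1))" using order_divides_expdiff[OF cop] ordh by simp
    then show "x = y" using x y by (simp add: cong_def)
  qed
  have sub: "(\<lambda>i. h ^ i * l mod n) ` {..<n-1} \<subseteq> {1..<n}" using nz_mod[OF l] by auto
  have "card ((\<lambda>i. h ^ i * l mod n) ` {..<n-1}) = card {1..<n}"
    using card_image[OF inj] by simp
  then have "(\<lambda>i. h ^ i * l mod n) ` {..<n-1} = {1..<n}"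
    using card_subset_eq[OF _ sub] by simp
  then show ?thesis using inj by (simp add: bij_betw_def)
qed

lemma prod_pow: assumes "l \<in> {1..<n}"
  shows "(\<Prod>i<n-1. (L :: nat \<Rightarrow> complex) (h ^ i * l mod n)) = (\<Prod>k\<in>{1..<n}. L k)"
  using prod.reindex_bij_betw[OF pow_bij[OF assms], of L] by simp

lemma step_mod: "(h ^ m * l mod n) * h mod n = h ^ Suc m * l mod n"
proof -
  have "(h ^ m * l mod n) * h mod n = (h ^ m * l * h) mod n" by (simp add: mod_mult_left_eq)
  also have "h ^ m * l * h = h ^ Suc m * l" by (simp add: mult_ac)
  finally show ?thesis .
qed

lemma forward:
  fixes L :: "nat \<Rightarrow> complex"
  assumes R: "\<forall>k<n. z * b (k * h mod n) = b k * L k" and l: "l < n" "b l \<noteq> 0"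
  shows "z = L 0 \<or> z ^ (n - 1) = (\<Prod>k\<in>{1..<n}. L k)"
proof (cases "l = 0")
  case True
  then have "z * b 0 = b 0 * L 0" using R n1 by auto
  then show ?thesis using l True by simp
next
  case False
  then have l1: "l \<in> {1..<n}" using l by simp
  have ind: "z ^ m * b (h ^ m * l mod n) = (\<Prod>i<m. L (h ^ i * l mod n)) * b l" for m
  proof (induction m)
    case 0
    then show ?case using l by simp
  next
    case (Suc m)
    have lt: "h ^ m * l mod n < n" using n1 by simp
    have "z ^ Suc m * b (h ^ Suc m * l mod n) = z ^ m * (z * b ((h ^ m * l mod n) * h mod n))"
      by (simp add: step_mod)
    also have "\<dots> = z ^ m * b (h ^ m * l mod n) * L (h ^ m * l mod n)"
      using R lt by simp
    also have "\<dots> = (\<Prod>i<Suc m. L (h ^ i * l mod n)) * b l"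
      using Suc.IH by simp
    finally show ?case .
  qed
  have "h ^ (n - 1) * l mod n = l"
  proof -
    have "h ^ (n - 1) * l mod n = (h ^ (n - 1) mod n) * l mod n" by (simp add: mod_mult_left_eq)
    then show ?thesis using hpow l by simp
  qed
  then have "z ^ (n - 1) * b l = (\<Prod>k\<in>{1..<n}. L k) * b l"
    using ind[of "n - 1"] prod_pow[OF l1, of L] by simp
  then show ?thesis using l by simp
qed

lemma backward:
  fixes L :: "nat \<Rightarrow> complex"
  assumes z: "z = L 0 \<or> z ^ (n - 1) = (\<Prod>k\<in>{1..<n}. L k)"
  shows "\<exists>a. (\<exists>l<n. a l \<noteq> 0) \<and> (\<forall>k<n. z * a (k * h mod n) = a k * L k)"
proof (cases "z = L 0")
  case True
  define a where "a k = (if k = 0 then 1 else (0::complex))" for k :: nat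
  have "\<forall>k<n. z * a (k * h mod n) = a k * L k"
  proof (intro allI impI)
    fix k assume k: "k < n"
    show "z * a (k * h mod n) = a k * L k"
    proof (cases "k = 0")
      case False
      then have "k * h mod n \<noteq> 0" using mulh_nz k by simp
      then show ?thesis using False by (simp add: a_def)
    qed (simp add: a_def True)
  qed
  moreover have "a 0 \<noteq> 0" by (simp add: a_def)
  moreover have "(0::nat) < n" using n1 by simp
  ultimately show ?thesis by blast
next
  case False
  then have zP: "z ^ (n - 1) = (\<Prod>k\<in>{1..<n}. L k)" using z by simp
  show ?thesis
  proof (cases "z = 0")
    case True
    have "n - 1 \<noteq> 0" using n1 by simp
    then have "(\<Prod>k\<in>{1..<n}. L k) = 0" using zP True by (simp add: zero_power)
    then obtain k0 where k0: "k0 \<in> {1..<n}" "L k0 = 0" by auto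
    define a where "a k = (if k = k0 then 1 else (0::complex))" for k :: nat
    have "\<forall>k<n. z * a (k * h mod n) = a k * L k"
      using True k0 by (auto simp: a_def)
    moreover have "a k0 \<noteq> 0" "k0 < n" using k0 by (auto simp: a_def)
    ultimately show ?thesis by blast
  next
    case znz: False
    have one: "(1::nat) \<in> {1..<n}" using n1 by simp
    note bij1 = pow_bij[OF one]
    define e where "e = the_inv_into {..<n-1} (\<lambda>i. h ^ i * 1 mod n)"
    define F where "F m = (\<Prod>i<m. L (h ^ i * 1 mod n)) / z ^ m" for m :: nat
    define a where "a k = (if k \<in> {1..<n} then F (e k) else 0)" for k :: nat
    have e_in: "e k < n - 1" and e_eq: "h ^ e k * 1 mod n = k" if "k \<in> {1..<n}" for k
  proof -
    have inj1: "inj_on (\<lambda>i. h ^ i * 1 mod n) {..<n-1}" and img: "(\<lambda>i. h ^ i * 1 mod n) ` {..<n-1} = {1..<n}"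
      using bij1 by (auto simp: bij_betw_def)
    have kk: "k \<in> (\<lambda>i. h ^ i * 1 mod n) ` {..<n-1}" using img that by simp
    show "e k < n - 1" using the_inv_into_into[OF inj1 kk, of "{..<n-1}"] unfolding e_def by simp
    show "h ^ e k * 1 mod n = k" using f_the_inv_into_f[OF inj1 kk] unfolding e_def by simp
  qed
    have e_of: "e (h ^ m * 1 mod n) = m" if "m < n - 1" for m
      using the_inv_into_f_f[OF bij_betw_imp_inj_on[OF bij1], of m] that unfolding e_def by simp
    have e1: "e 1 = 0" using e_of[of 0] n1 by simp
    have "\<forall>k<n. z * a (k * h mod n) = a k * L k"
    proof (intro allI impI)
      fix k assume k: "k < n"
      show "z * a (k * h mod n) = a k * L k"
      proof (cases "k = 0")
        case True then show ?thesis by (simp add: a_def)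
      next
        case False
        then have kin: "k \<in> {1..<n}" using k by simp
        define m where "m = e k"
        have m: "m < n - 1" "h ^ m * 1 mod n = k" using e_in[OF kin] e_eq[OF kin] by (auto simp: m_def)
        have kh: "k * h mod n = h ^ Suc m * 1 mod n" using step_mod[of m 1] m(2) by simp
        have khin: "k * h mod n \<in> {1..<n}" using mulh_nz[OF kin] n1 by simp
        show ?thesis
        proof (cases "Suc m < n - 1")
          case True
          then have "e (k * h mod n) = Suc m" unfolding kh by (rule e_of)
          then have "a (k * h mod n) = F (Suc m)" using khin by (simp add: a_def)
          moreover have "a k = F m" using kin by (simp add: a_def m_def)
          moreover have "z * F (Suc m) = F m * L k"
            using znz m(2) by (simp add: F_def field_simps)
          ultimately show ?thesis by simp
        next
          case False
          then have sm: "Suc m = n - 1" using m by simp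
          then have "k * h mod n = 1" using kh hpow by simp
          then have "a (k * h mod n) = 1" using one e1 by (simp add: a_def F_def)
          moreover have "a k = F m" using kin by (simp add: a_def m_def)
          moreover have "F m * L k = z"
          proof -
            have "(\<Prod>i<Suc m. L (h ^ i * 1 mod n)) = z ^ Suc m"
              using prod_pow[OF one, of L] zP sm by simp
            then have "(\<Prod>i<m. L (h ^ i * 1 mod n)) * L k = z ^ Suc m" using m(2) by simp
            then show ?thesis using znz by (simp add: F_def field_simps)
          qed
          ultimately show ?thesis by simp
        qed
      qed
    qed
    moreover have "a 1 \<noteq> 0" using one e1 by (simp add: a_def F_def)
    ultimately show ?thesis using n1 by blast
  qed
qed

end



context prim begin

lemma eig_char:
  "eigenvalues (Q_mat n h * circulant n c) = insert (lam n c 0) {z. z ^ (n - 1) = (\<Prod>k\<in>{1..<n}. lam n c k)}"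
proof -
  have n0: "n > 0" using n1 by simp
  show ?thesis
  proof (intro equalityI subsetI)
    fix z assume "z \<in> eigenvalues (Q_mat n h * circulant n c)"
    then have "eigenvalue (Q_mat n h * circulant n c) z" by (simp add: eigenvalues_def)
    then obtain b l where "l < n" "b l \<noteq> 0" "\<forall>k<n. z * b (k * h mod n) = b k * lam n c k"
      using E2[OF n0 cop] by blast
    then show "z \<in> insert (lam n c 0) {z. z ^ (n - 1) = (\<Prod>k\<in>{1..<n}. lam n c k)}"
      using forward by blast
  next
    fix z assume "z \<in> insert (lam n c 0) {z. z ^ (n - 1) = (\<Prod>k\<in>{1..<n}. lam n c k)}"
    then have "z = lam n c 0 \<or> z ^ (n - 1) = (\<Prod>k\<in>{1..<n}. lam n c k)" by simp
    then obtain a l where "l < n" "a l \<noteq> 0" "\<forall>k<n. z * a (k * h mod n) = a k * lam n c k"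
      using backward by blast
    then have "eigenvalue (Q_mat n h * circulant n c) z" using E1[OF n0 cop] by blast
    then show "z \<in> eigenvalues (Q_mat n h * circulant n c)" by (simp add: eigenvalues_def)
  qed
qed

end

lemma inv_primroot:
  fixes n g ginv :: nat
  assumes "residue_primroot n g" "[g * ginv = 1] (mod n)"
  shows "residue_primroot n ginv"
proof -
  have n0: "n > 0" and cg: "coprime n g" and og: "ord n g = totient n"
    using assms(1) by (auto simp: residue_primroot_def)
  have "coprime 1 n" by simp
  then have "coprime (g * ginv) n" using cong_imp_coprime[OF cong_sym[OF assms(2)]] by blast
  then have cgi: "coprime n ginv" by (simp add: coprime_commute)
  have p: "[g ^ d * ginv ^ d = 1] (mod n)" for d
    using cong_pow[OF assms(2), of d] by (simp add: power_mult_distrib)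
  have key: "[ginv ^ d = 1] (mod n) \<longleftrightarrow> [g ^ d = 1] (mod n)" for d
  proof
    assume h: "[ginv ^ d = 1] (mod n)"
    have "[g ^ d * 1 = g ^ d * ginv ^ d] (mod n)" by (rule cong_mult[OF cong_refl cong_sym[OF h]])
    then show "[g ^ d = 1] (mod n)" using p[of d] by (simp add: cong_trans)
  next
    assume h: "[g ^ d = 1] (mod n)"
    have "[1 * ginv ^ d = g ^ d * ginv ^ d] (mod n)" by (rule cong_mult[OF cong_sym[OF h] cong_refl])
    then show "[ginv ^ d = 1] (mod n)" using p[of d] by (simp add: cong_trans)
  qed
  have "[ginv ^ ord n g = 1] (mod n)" using key[of "ord n g"] ord[of g n] by blast
  then have "ord n ginv dvd ord n g" by (rule ord_divides[THEN iffD1])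
  moreover have "[g ^ ord n ginv = 1] (mod n)" using key[of "ord n ginv"] ord[of ginv n] by blast
  then have "ord n g dvd ord n ginv" by (rule ord_divides[THEN iffD1])
  ultimately have "ord n ginv = ord n g" by (rule dvd_antisym)
  then show ?thesis using n0 cgi og by (simp add: residue_primroot_def)
qed

theorem mainTheorem7:
  fixes n g1 g2 :: nat and c :: "nat \<Rightarrow> complex"
  assumes "prime n"
    and "residue_primroot n g1"
    and "residue_primroot n g2"
  shows "eigenvalues (Q_mat n g1 * circulant n c) = eigenvalues (Q_mat n g2 * circulant n c)
    \<and> (\<forall>g1inv. [g1 * g1inv = 1] (mod n) \<longrightarrow>
           eigenvalues (Q_mat n g1 * circulant n c) = eigenvalues (Q_mat n g1inv * circulant n c))"
proof -
  interpret p1: prim n g1 using assms by unfold_locales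
  interpret p2: prim n g2 using assms by unfold_locales
  have "\<forall>g1inv. [g1 * g1inv = 1] (mod n) \<longrightarrow>
           eigenvalues (Q_mat n g1 * circulant n c) = eigenvalues (Q_mat n g1inv * circulant n c)"
  proof (intro allI impI)
    fix g1inv assume "[g1 * g1inv = 1] (mod n)"
    then have "residue_primroot n g1inv" using inv_primroot assms(2) by blast
    then interpret p3: prim n g1inv using assms by unfold_locales
    show "eigenvalues (Q_mat n g1 * circulant n c) = eigenvalues (Q_mat n g1inv * circulant n c)"
      using p1.eig_char p3.eig_char by simp
  qed
  then show ?thesis using p1.eig_char p2.eig_char by simp
qed

end
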